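(* Let $\mathcal U=\{U_1|\dots|U_b\}$ be a partition of a $v$-set $\mathcal V$ into $b$ parts of size $a$, $v=ab$, $a>1$, $b\ge4$, let $k=ak_0$ with $1\le k_0\le b-1$, let $\Gamma_0\subseteq\binom{\mathcal U}{k_0}$, and let $\Gamma=\Gamma(a,\Gamma_0)$ be the set of all $k$-subsets of $\mathcal V$ of the form $\bigcup_{U\in\gamma_0}U$ with $\gamma_0\in\Gamma_0$. Let $A={\rm Aut}(\Gamma_0)\cap{\rm Sym}(\mathcal U)$. Then ${\rm Aut}(\Gamma)$ contains $S_a\wr A$, and $\delta(\Gamma)=a\,\delta(\Gamma_0)$. Moreover: (a) if $\Gamma_0$ is $A$-strongly incidence-transitive, then $\Gamma$ is $(S_a\wr A)$-strongly incidence-transitive, and either $\Gamma_0=\binom{\mathcal U}{k_0}$ or $\delta(\Gamma_0)\ge2$; (b) conversely, if $S_a\wr A$ is neighbour-transitive on $\Gamma$ (i.e. transitive on $\Gamma$ and on its neighbour set), then either $\Gamma_0$ is $A$-strongly incidence-transitive, or $a=2$ and $\delta(\Gamma_0)=1$.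
   Context: $\Gamma_0$ is regarded as a set of vertices of the Johnson graph $J(b,k_0)$ on the $b$-set $\mathcal U$, and $\Gamma$ as a set of vertices of $J(v,k)$ on $\mathcal V$; $J(n,j)$ has as vertices the $j$-subsets of an $n$-set, adjacent iff they meet in $j-1$ points. For such a set $\Delta$ of vertices: $\delta(\Delta)$ is the least graph distance between distinct elements; the neighbour set is the set of vertices not in $\Delta$ adjacent to some element of $\Delta$; ${\rm Aut}(\Delta)$ is the setwise stabiliser of $\Delta$ in the automorphism group of the Johnson graph. $S_a\wr A$ denotes the subgroup of ${\rm Sym}(\mathcal V)$ preserving $\mathcal U$, inducing a permutation in $A$ on the parts and arbitrary permutations within parts. $\Delta$ is $H$-strongly incidence-transitive (for $H$ a group of permutations of the underlying set leaving $\Delta$ invariant) if $H$ is transitive on $\Delta$ and, for $\delta\in\Delta$, $H_\delta$ is transitive on $\delta\times(\text{underlying set}\setminus\delta)$. *)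

theory Defs
  imports Main "HOL-Library.Extended_Nat" "HOL-Library.Disjoint_Sets"
    "HOL-Combinatorics.Permutations"
begin

definition johnson_verts :: "'b set \<Rightarrow> nat \<Rightarrow> 'b set set" where
  "johnson_verts X j = {S. S \<subseteq> X \<and> card S = j}"

definition johnson_adj :: "'b set \<Rightarrow> nat \<Rightarrow> 'b set \<Rightarrow> 'b set \<Rightarrow> bool" where
  "johnson_adj X j A B \<longleftrightarrow> A \<in> johnson_verts X j \<and> B \<in> johnson_verts X j \<and> A \<noteq> B
      \<and> card (A \<inter> B) = j - 1"

inductive walk :: "('c \<Rightarrow> 'c \<Rightarrow> bool) \<Rightarrow> nat \<Rightarrow> 'c \<Rightarrow> 'c \<Rightarrow> bool" for adj where
  walk_nil: "walk adj 0 x x"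
| walk_step: "adj x y \<Longrightarrow> walk adj n y z \<Longrightarrow> walk adj (Suc n) x z"

definition graph_dist :: "('c \<Rightarrow> 'c \<Rightarrow> bool) \<Rightarrow> 'c \<Rightarrow> 'c \<Rightarrow> enat" where
  "graph_dist adj x y = Inf {enat n | n. walk adj n x y}"

(* minimum distance delta(Delta) of a code Delta in J(|X|, j);
   by convention infinity if Delta has fewer than two elements *)
definition min_dist :: "'b set \<Rightarrow> nat \<Rightarrow> 'b set set \<Rightarrow> enat" where
  "min_dist X j \<Delta> = Inf {graph_dist (johnson_adj X j) x y | x y. x \<in> \<Delta> \<and> y \<in> \<Delta> \<and> x \<noteq> y}"

definition nbr_set :: "'b set \<Rightarrow> nat \<Rightarrow> 'b set set \<Rightarrow> 'b set set" where
  "nbr_set X j \<Delta> = {w \<in> johnson_verts X j. w \<notin> \<Delta> \<and> (\<exists>d\<in>\<Delta>. johnson_adj X j d w)}"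

definition johnson_aut :: "'b set \<Rightarrow> nat \<Rightarrow> 'b set set \<Rightarrow> ('b set \<Rightarrow> 'b set) set" where
  "johnson_aut X j \<Delta> = {\<phi>. bij_betw \<phi> (johnson_verts X j) (johnson_verts X j)
      \<and> (\<forall>A\<in>johnson_verts X j. \<forall>B\<in>johnson_verts X j.
            johnson_adj X j (\<phi> A) (\<phi> B) \<longleftrightarrow> johnson_adj X j A B)
      \<and> \<phi> ` \<Delta> = \<Delta>}"

definition set_transitive :: "('b \<Rightarrow> 'b) set \<Rightarrow> 'b set set \<Rightarrow> bool" where
  "set_transitive H \<Delta> \<longleftrightarrow> (\<forall>x\<in>\<Delta>. \<forall>y\<in>\<Delta>. \<exists>h\<in>H. h ` x = y)"

definition strongly_incidence_transitive :: "('b \<Rightarrow> 'b) set \<Rightarrow> 'b set \<Rightarrow> 'b set set \<Rightarrow> bool" where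
  "strongly_incidence_transitive H X \<Delta> \<longleftrightarrow>
     (\<forall>h\<in>H. (\<lambda>S. h ` S) ` \<Delta> = \<Delta>) \<and> set_transitive H \<Delta> \<and>
     (\<forall>d\<in>\<Delta>. \<forall>x\<in>d. \<forall>y\<in>X - d. \<forall>x'\<in>d. \<forall>y'\<in>X - d.
         \<exists>h\<in>H. h ` d = d \<and> h x = x' \<and> h y = y')"

definition neighbour_transitive :: "('b \<Rightarrow> 'b) set \<Rightarrow> 'b set \<Rightarrow> nat \<Rightarrow> 'b set set \<Rightarrow> bool" where
  "neighbour_transitive H X j \<Delta> \<longleftrightarrow> set_transitive H \<Delta> \<and> set_transitive H (nbr_set X j \<Delta>)"

definition aut_sym :: "'b set \<Rightarrow> nat \<Rightarrow> 'b set set \<Rightarrow> ('b \<Rightarrow> 'b) set" where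
  "aut_sym U k0 \<Gamma>0 = {\<sigma>. \<sigma> permutes U \<and> (\<lambda>S. \<sigma> ` S) \<in> johnson_aut U k0 \<Gamma>0}"

(* S_a wr A: permutations of V preserving the partition U and inducing an element of A on U *)
definition wreath :: "'a set \<Rightarrow> 'a set set \<Rightarrow> ('a set \<Rightarrow> 'a set) set \<Rightarrow> ('a \<Rightarrow> 'a) set" where
  "wreath V U A = {g. g permutes V \<and> (\<forall>u\<in>U. g ` u \<in> U)
      \<and> (\<lambda>u. if u \<in> U then g ` u else u) \<in> A}"

definition blowup :: "'a set set set \<Rightarrow> 'a set set" where
  "blowup \<Gamma>0 = (\<lambda>\<gamma>. \<Union>\<gamma>) ` \<Gamma>0"

end

theory Submission
  imports Defs
begin


lemma jv_finite: "finite X \<Longrightarrow> S \<in> johnson_verts X j \<Longrightarrow> finite S"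
  unfolding johnson_verts_def by (auto intro: finite_subset)

lemma adj_card_diff:
  assumes "finite X" "johnson_adj X j x y"
  shows "card (x - y) = 1"
proof -
  have x: "x \<subseteq> X" "card x = j" and y: "y \<subseteq> X" "card y = j" and ne: "x \<noteq> y"
    and i: "card (x \<inter> y) = j - 1"
    using assms(2) unfolding johnson_adj_def johnson_verts_def by auto
  have fx: "finite x" "finite y" using x y assms(1) by (auto intro: finite_subset)
  have "j \<noteq> 0" using x y fx ne by auto
  moreover have "card (x - y) = card x - card (x \<inter> y)"
    using fx by (simp add: card_Diff_subset_Int)
  ultimately show ?thesis using x i by simp
qed

lemma walk_lower:
  assumes "walk (johnson_adj X j) n x z" "finite X"
  shows "card (x - z) \<le> n"
  using assms
proof (induction rule: walk.induct)
  case (walk_nil x) then show ?case by simp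
next
  case (walk_step x y n z)
  have fx: "finite x" "finite y"
    using walk_step.hyps(1) walk_step.prems unfolding johnson_adj_def johnson_verts_def
    by (auto intro: finite_subset)
  have "card (x - z) \<le> card ((x - y) \<union> (y - z))"
    by (rule card_mono) (use fx in auto)
  also have "\<dots> \<le> card (x - y) + card (y - z)" by (rule card_Un_le)
  also have "\<dots> \<le> 1 + n" using adj_card_diff[OF walk_step.prems walk_step.hyps(1)] walk_step.IH walk_step.prems by simp
  finally show ?case by simp
qed

lemma card_diff_sym:
  assumes "finite A" "finite B" "card A = card B"
  shows "card (A - B) = card (B - A)"
  using assms by (simp add: card_Diff_subset_Int Int_commute)

lemma walk_exists:
  assumes "finite X" "B \<in> johnson_verts X j"
  shows "A \<in> johnson_verts X j \<Longrightarrow> walk (johnson_adj X j) (card (A - B)) A B"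
proof (induction "card (A - B)" arbitrary: A)
  case 0
  have fin: "finite A" "finite B" using 0(2) assms by (auto intro: jv_finite)
  have "A - B = {}" using 0 fin by simp
  hence "A \<subseteq> B" by auto
  moreover have "card A = card B" using 0(2) assms(2) unfolding johnson_verts_def by auto
  ultimately have "A = B" using fin card_subset_eq by blast
  then show ?case using 0(1) by (simp add: walk_nil)
next
  case (Suc m)
  have fin: "finite A" "finite B" using Suc(3) assms by (auto intro: jv_finite)
  have cA: "card A = j" "A \<subseteq> X" and cB: "card B = j" "B \<subseteq> X"
    using Suc(3) assms(2) unfolding johnson_verts_def by auto
  have "A - B \<noteq> {}" using Suc(2) by (metis card.empty nat.distinct(1))
  then obtain x where x: "x \<in> A" "x \<notin> B" by blast
  have "card (B - A) = Suc m" using card_diff_sym[OF fin] cA cB Suc(2) by simp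
  hence "B - A \<noteq> {}" by (metis card.empty nat.distinct(1))
  then obtain y where y: "y \<in> B" "y \<notin> A" by blast
  define A' where "A' = insert y (A - {x})"
  have "card A > 0" using fin x by (auto simp: card_gt_0_iff)
  hence j1: "j \<ge> 1" using cA by simp
  have cA': "card A' = j" unfolding A'_def using fin x y cA j1
    by (simp add: card_Suc_Diff1)
  have vA': "A' \<in> johnson_verts X j" unfolding johnson_verts_def A'_def using cA' cB y cA
    by (auto simp: A'_def)
  have "A \<inter> A' = A - {x}" unfolding A'_def using y by auto
  hence "card (A \<inter> A') = j - 1" using fin x cA by simp
  moreover have "A \<noteq> A'" using y unfolding A'_def by auto
  ultimately have adj: "johnson_adj X j A A'" using Suc(3) vA' unfolding johnson_adj_def by auto
  have "A' - B = (A - B) - {x}" unfolding A'_def using y by auto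
  hence "card (A' - B) = m" using Suc(2) x fin by simp
  hence "walk (johnson_adj X j) m A' B" using Suc(1)[of A'] vA' by simp
  hence "walk (johnson_adj X j) (Suc m) A B" by (rule walk_step[where adj="johnson_adj X j", OF adj])
  then show ?case using Suc(2) by simp
qed

lemma graph_dist_eq:
  assumes "finite X" "A \<in> johnson_verts X j" "B \<in> johnson_verts X j"
  shows "graph_dist (johnson_adj X j) A B = enat (card (A - B))"
  unfolding graph_dist_def
proof (rule antisym)
  show "Inf {enat n |n. walk (johnson_adj X j) n A B} \<le> enat (card (A - B))"
    using walk_exists[OF assms(1,3,2)] by (auto intro!: Inf_lower)
  show "enat (card (A - B)) \<le> Inf {enat n |n. walk (johnson_adj X j) n A B}"
    using walk_lower assms(1) by (auto intro!: Inf_greatest)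
qed

lemma min_dist_eq:
  assumes "finite X" "\<Delta> \<subseteq> johnson_verts X j"
  shows "min_dist X j \<Delta> = Inf {enat (card (x - y)) | x y. x \<in> \<Delta> \<and> y \<in> \<Delta> \<and> x \<noteq> y}"
proof -
  have eq: "\<And>x y. x \<in> \<Delta> \<Longrightarrow> y \<in> \<Delta> \<Longrightarrow> graph_dist (johnson_adj X j) x y = enat (card (x - y))"
    using graph_dist_eq[OF assms(1)] assms(2) by auto
  show ?thesis unfolding min_dist_def
    by (rule arg_cong[where f=Inf]) (use eq in force)
qed



lemma bij_pt:
  assumes "finite u" "finite w" "card u = card w" "p \<in> u" "p' \<in> w"
  shows "\<exists>f. bij_betw f u w \<and> f p = p'"
proof -
  have "card (u - {p}) = card (w - {p'})" using assms by simp
  then obtain h where h: "bij_betw h (u - {p}) (w - {p'})"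
    using finite_same_card_bij assms(1,2) by (meson finite_Diff)
  define f where "f = h(p := p')"
  have "bij_betw f (u - {p}) (w - {p'})"
    using h unfolding f_def by (rule bij_betw_cong[THEN iffD1, rotated]) auto
  moreover have "bij_betw f {p} {p'}" unfolding f_def by (simp add: bij_betw_def)
  ultimately have "bij_betw f ((u - {p}) \<union> {p}) ((w - {p'}) \<union> {p'})"
    by (rule bij_betw_combine) simp
  moreover have "(u - {p}) \<union> {p} = u" "(w - {p'}) \<union> {p'} = w" using assms by auto
  ultimately show ?thesis unfolding f_def by auto
qed

definition ind :: "'a set set \<Rightarrow> ('a \<Rightarrow> 'a) \<Rightarrow> 'a set \<Rightarrow> 'a set" where
  "ind U g = (\<lambda>u. if u \<in> U then g ` u else u)"

lemma wreath_memI: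
  assumes "g permutes V" "\<sigma> permutes U" "\<forall>u\<in>U. g ` u = \<sigma> u" "\<sigma> \<in> A"
  shows "g \<in> wreath V U A"
proof -
  have "(\<lambda>u. if u \<in> U then g ` u else u) = \<sigma>"
    using assms(2,3) by (auto simp: fun_eq_iff permutes_not_in)
  moreover have "\<forall>u\<in>U. g ` u \<in> U" using assms(2,3) by (simp add: permutes_in_image)
  ultimately show ?thesis using assms unfolding wreath_def by auto
qed

lemma wreath_memD:
  assumes "g \<in> wreath V U A"
  shows "g permutes V" "ind U g \<in> A" "\<And>u. u \<in> U \<Longrightarrow> ind U g u = g ` u"
  using assms unfolding wreath_def ind_def by auto

lemma aut_symD:
  assumes "\<sigma> \<in> aut_sym U k0 \<Gamma>0"
  shows "\<sigma> permutes U" "(\<lambda>S. \<sigma> ` S) ` \<Gamma>0 = \<Gamma>0"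
  using assms unfolding aut_sym_def johnson_aut_def by auto

locale blow =
  fixes V :: "'a set" and U :: "'a set set" and a :: nat
  assumes finV: "finite V" and part: "partition_on V U" and cardU: "\<forall>u\<in>U. card u = a"
    and a1: "a > 1"
begin

lemma finU: "finite U" using finite_elements[OF finV part] .
lemma UV: "\<Union>U = V" using partition_onD1[OF part] by simp
lemma u_sub: "u \<in> U \<Longrightarrow> u \<subseteq> V" using UV by auto
lemma u_fin: "u \<in> U \<Longrightarrow> finite u" using u_sub finV by (auto intro: finite_subset)
lemma u_ne: "u \<in> U \<Longrightarrow> u \<noteq> {}" using partition_onD3[OF part] by auto
lemma u_card: "u \<in> U \<Longrightarrow> card u = a" using cardU by auto
lemma disj: "u \<in> U \<Longrightarrow> w \<in> U \<Longrightarrow> u \<noteq> w \<Longrightarrow> u \<inter> w = {}"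
  using partition_onD2[OF part] unfolding disjoint_def by (auto simp: disjnt_def)

definition pt :: "'a \<Rightarrow> 'a set" where "pt x = (THE u. u \<in> U \<and> x \<in> u)"

lemma pt_eq: assumes "u \<in> U" "x \<in> u" shows "pt x = u"
  unfolding pt_def
proof (rule the_equality)
  show "u \<in> U \<and> x \<in> u" using assms by simp
  fix w assume "w \<in> U \<and> x \<in> w" then show "w = u" using disj assms by blast
qed

lemma pt_in: assumes "x \<in> V" shows "pt x \<in> U" "x \<in> pt x"
proof -
  obtain u where "u \<in> U" "x \<in> u" using assms UV by auto
  then show "pt x \<in> U" "x \<in> pt x" using pt_eq by auto
qed

lemma Union_mem: assumes "\<gamma> \<subseteq> U" "x \<in> V" shows "x \<in> \<Union>\<gamma> \<longleftrightarrow> pt x \<in> \<gamma>"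
  using assms pt_in pt_eq by auto

lemma Int_Union: assumes "\<gamma> \<subseteq> U" "u \<in> U" shows "u \<inter> \<Union>\<gamma> = (if u \<in> \<gamma> then u else {})"
  using assms disj by auto

lemma card_Union: assumes "\<gamma> \<subseteq> U" shows "card (\<Union>\<gamma>) = a * card \<gamma>"
proof -
  have "pairwise disjnt \<gamma>" using assms disj unfolding pairwise_def disjnt_def by blast
  hence "card (\<Union>\<gamma>) = sum card \<gamma>" using card_Union_disjoint u_fin assms by blast
  also have "\<dots> = sum (\<lambda>_. a) \<gamma>" using assms u_card by (intro sum.cong) auto
  finally show ?thesis by simp
qed

lemma Union_fin: assumes "\<gamma> \<subseteq> U" shows "finite (\<Union>\<gamma>)" "\<Union>\<gamma> \<subseteq> V"
  using assms finU u_fin u_sub by (auto intro: finite_subset)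

lemma Union_inj: assumes "\<gamma> \<subseteq> U" "\<gamma>' \<subseteq> U" "\<Union>\<gamma> = \<Union>\<gamma>'" shows "\<gamma> = \<gamma>'"
proof -
  have *: "\<gamma>1 \<subseteq> \<gamma>2" if "\<gamma>1 \<subseteq> U" "\<gamma>2 \<subseteq> U" "\<Union>\<gamma>1 = \<Union>\<gamma>2" for \<gamma>1 \<gamma>2
  proof
    fix u assume u: "u \<in> \<gamma>1"
    have "u \<in> U" using u that(1) by auto
    then obtain x where x: "x \<in> u" using u_ne by blast
    hence "x \<in> \<Union>\<gamma>2" using u that by auto
    then obtain w where "w \<in> \<gamma>2" "x \<in> w" by auto
    then show "u \<in> \<gamma>2" using pt_eq x u that by (metis subsetD)
  qed
  show ?thesis using *[of \<gamma> \<gamma>'] *[of \<gamma>' \<gamma>] assms by auto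
qed

lemma Union_diff: assumes "\<gamma> \<subseteq> U" "\<gamma>' \<subseteq> U" shows "\<Union>\<gamma> - \<Union>\<gamma>' = \<Union>(\<gamma> - \<gamma>')"
  using assms disj by blast

lemma lift_gen:
  assumes \<sigma>: "\<sigma> permutes U" and F: "\<forall>u\<in>U. bij_betw (F u) u (\<sigma> u)"
  shows "\<exists>g. g permutes V \<and> (\<forall>u\<in>U. g ` u = \<sigma> u) \<and> (\<forall>u\<in>U. \<forall>x\<in>u. g x = F u x)"
proof -
  define g where "g x = (if x \<in> V then F (pt x) x else x)" for x
  have gF: "\<forall>u\<in>U. \<forall>x\<in>u. g x = F u x" unfolding g_def using pt_eq u_sub by auto
  have gu: "\<forall>u\<in>U. g ` u = \<sigma> u"
  proof
    fix u assume u: "u \<in> U"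
    have "g ` u = F u ` u" using gF u by (auto simp: image_iff)
    also have "\<dots> = \<sigma> u" using F u bij_betw_imp_surj_on by blast
    finally show "g ` u = \<sigma> u" .
  qed
  have sU: "u \<in> U \<Longrightarrow> \<sigma> u \<in> U" for u using \<sigma> by (simp add: permutes_in_image)
  have inj: "inj_on g V"
  proof (rule inj_onI)
    fix x y assume xy: "x \<in> V" "y \<in> V" "g x = g y"
    have gx: "g x \<in> \<sigma> (pt x)" using gu pt_in[OF xy(1)] by blast
    have gy: "g y \<in> \<sigma> (pt y)" using gu pt_in[OF xy(2)] by blast
    have "pt x = pt y"
    proof (rule ccontr)
      assume "pt x \<noteq> pt y"
      hence "\<sigma> (pt x) \<noteq> \<sigma> (pt y)" using \<sigma> by (metis permutes_inj injD)
      hence "\<sigma> (pt x) \<inter> \<sigma> (pt y) = {}" using disj sU pt_in xy by blast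
      thus False using gx gy xy(3) by auto
    qed
    moreover have "inj_on (F (pt x)) (pt x)" using F pt_in[OF xy(1)] bij_betw_def by blast
    moreover have "g x = F (pt x) x" using gF pt_in[OF xy(1)] by blast
    moreover have "g y = F (pt x) y" using gF pt_in[OF xy(2)] \<open>pt x = pt y\<close> by metis
    ultimately show "x = y" using xy pt_in inj_onD by metis
  qed
  have "g ` V = \<Union>((\<lambda>u. g ` u) ` U)" using UV by auto
  also have "\<dots> = \<Union>(\<sigma> ` U)" using gu by auto
  also have "\<dots> = V" using permutes_image[OF \<sigma>] UV by simp
  finally have "bij_betw g V V" using inj by (simp add: bij_betw_def)
  hence "g permutes V" by (rule bij_imp_permutes) (simp add: g_def)
  then show ?thesis using gu gF by blast
qed

lemma lift1:
  assumes \<sigma>: "\<sigma> permutes U"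
  shows "\<exists>g. g permutes V \<and> (\<forall>u\<in>U. g ` u = \<sigma> u)"
proof -
  define F where "F u = (SOME f. bij_betw f u (\<sigma> u))" for u
  have "\<forall>u\<in>U. bij_betw (F u) u (\<sigma> u)"
  proof
    fix u assume u: "u \<in> U"
    have "\<sigma> u \<in> U" using \<sigma> u by (simp add: permutes_in_image)
    hence "\<exists>f. bij_betw f u (\<sigma> u)" using u u_fin u_card finite_same_card_bij by metis
    then show "bij_betw (F u) u (\<sigma> u)" unfolding F_def by (rule someI_ex)
  qed
  then show ?thesis using lift_gen[OF \<sigma>] by blast
qed

lemma lift2:
  assumes \<sigma>: "\<sigma> permutes U" and ux: "ux \<in> U" and uy: "uy \<in> U" and ne: "ux \<noteq> uy"
    and p: "p \<in> ux" and q: "q \<in> uy" and p': "p' \<in> \<sigma> ux" and q': "q' \<in> \<sigma> uy"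
  shows "\<exists>g. g permutes V \<and> (\<forall>u\<in>U. g ` u = \<sigma> u) \<and> g p = p' \<and> g q = q'"
proof -
  have sU: "u \<in> U \<Longrightarrow> \<sigma> u \<in> U" for u using \<sigma> by (simp add: permutes_in_image)
  obtain fx where fx: "bij_betw fx ux (\<sigma> ux)" "fx p = p'"
    using bij_pt[OF u_fin[OF ux] u_fin[OF sU[OF ux]] _ p p'] u_card ux sU by metis
  obtain fy where fy: "bij_betw fy uy (\<sigma> uy)" "fy q = q'"
    using bij_pt[OF u_fin[OF uy] u_fin[OF sU[OF uy]] _ q q'] u_card uy sU by metis
  define F where "F u = (if u = ux then fx else if u = uy then fy else SOME f. bij_betw f u (\<sigma> u))" for u
  have "\<forall>u\<in>U. bij_betw (F u) u (\<sigma> u)"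
  proof
    fix u assume u: "u \<in> U"
    have "\<exists>f. bij_betw f u (\<sigma> u)" using u u_fin u_card finite_same_card_bij sU by metis
    hence "bij_betw (SOME f. bij_betw f u (\<sigma> u)) u (\<sigma> u)" by (rule someI_ex)
    then show "bij_betw (F u) u (\<sigma> u)" unfolding F_def using fx fy by auto
  qed
  then obtain g where g: "g permutes V" "\<forall>u\<in>U. g ` u = \<sigma> u" "\<forall>u\<in>U. \<forall>x\<in>u. g x = F u x"
    using lift_gen[OF \<sigma>] by blast
  have "g p = p'" using g(3) ux p fx unfolding F_def by auto
  moreover have "g q = q'" using g(3) uy q fy ne unfolding F_def by auto
  ultimately show ?thesis using g by blast
qed

end



lemma perm_jaut:
  assumes g: "g permutes V" and fin: "finite V"
  shows "(\<lambda>S. g ` S) \<in> johnson_aut V j \<Delta> \<longleftrightarrow> (\<lambda>S. g ` S) ` \<Delta> = \<Delta>"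
proof -
  have inj: "inj g" using g permutes_inj by blast
  have gi: "\<And>x. inv g (g x) = x" "\<And>x. g (inv g x) = x" using permutes_inverses[OF g] by auto
  have ig: "inv g permutes V" using permutes_inv[OF g] .
  have mem: "h ` S \<in> johnson_verts V j" if "h permutes V" "S \<in> johnson_verts V j" for h S
  proof -
    have "inj h" using that(1) permutes_inj by blast
    then show ?thesis using that permutes_image[OF that(1)] unfolding johnson_verts_def
      by (auto simp: card_image inj_on_subset)
  qed
  have bij: "bij_betw (\<lambda>S. g ` S) (johnson_verts V j) (johnson_verts V j)"
  proof (rule bij_betw_byWitness[where f'="\<lambda>S. inv g ` S"])
    show "\<forall>S\<in>johnson_verts V j. inv g ` g ` S = S" using gi by (simp add: image_image)
    show "\<forall>S\<in>johnson_verts V j. g ` inv g ` S = S" using gi by (simp add: image_image)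
    show "(\<lambda>S. g ` S) ` johnson_verts V j \<subseteq> johnson_verts V j" using mem[OF g] by auto
    show "(\<lambda>S. inv g ` S) ` johnson_verts V j \<subseteq> johnson_verts V j" using mem[OF ig] by auto
  qed
  have adj: "johnson_adj V j (g ` A) (g ` B) \<longleftrightarrow> johnson_adj V j A B"
    if "A \<in> johnson_verts V j" "B \<in> johnson_verts V j" for A B
  proof -
    have "g ` A \<inter> g ` B = g ` (A \<inter> B)" using inj by (simp add: image_Int)
    hence "card (g ` A \<inter> g ` B) = card (A \<inter> B)" using inj by (simp add: card_image inj_on_subset)
    moreover have "g ` A = g ` B \<longleftrightarrow> A = B" using inj by (simp add: inj_image_eq_iff)
    ultimately show ?thesis using that mem[OF g] unfolding johnson_adj_def by auto
  qed
  show ?thesis unfolding johnson_aut_def using bij adj by auto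
qed

lemma Inf_scale:
  assumes "(a::nat) > 0"
  shows "Inf ((\<lambda>n. enat (a * n)) ` S) = enat a * Inf (enat ` S)"
proof (cases "S = {}")
  case True then show ?thesis using assms by (simp add: top_enat_def)
next
  case False
  define m where "m = (LEAST n. n \<in> S)"
  have m1: "m \<in> S" using False unfolding m_def by (metis LeastI ex_in_conv)
  have m2: "\<And>n. n \<in> S \<Longrightarrow> m \<le> n" unfolding m_def by (rule Least_le)
  have "Inf (enat ` S) = enat m"
  proof (rule antisym)
    show "Inf (enat ` S) \<le> enat m" using m1 by (simp add: Inf_lower)
    show "enat m \<le> Inf (enat ` S)" by (rule Inf_greatest) (use m2 in auto)
  qed
  moreover have "Inf ((\<lambda>n. enat (a * n)) ` S) = enat (a * m)"
  proof (rule antisym)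
    show "Inf ((\<lambda>n. enat (a * n)) ` S) \<le> enat (a * m)" using m1 by (rule INF_lower)
    show "enat (a * m) \<le> Inf ((\<lambda>n. enat (a * n)) ` S)" by (rule Inf_greatest) (use m2 in auto)
  qed
  ultimately show ?thesis by simp
qed

locale blow0 = blow +
  fixes k0 :: nat and \<Gamma>0 :: "'a set set set"
  assumes G0: "\<Gamma>0 \<subseteq> johnson_verts U k0"
begin

abbreviation "A \<equiv> aut_sym U k0 \<Gamma>0"
abbreviation "W \<equiv> wreath V U A"
abbreviation "\<Gamma> \<equiv> blowup \<Gamma>0"

lemma G0U: "\<gamma> \<in> \<Gamma>0 \<Longrightarrow> \<gamma> \<subseteq> U" "\<gamma> \<in> \<Gamma>0 \<Longrightarrow> card \<gamma> = k0"
  using G0 unfolding johnson_verts_def by auto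

lemma G0fin: "\<gamma> \<in> \<Gamma>0 \<Longrightarrow> finite \<gamma>"
  using G0U finU by (auto intro: finite_subset)

lemma blow_verts: "\<Gamma> \<subseteq> johnson_verts V (a * k0)"
proof
  fix S assume "S \<in> \<Gamma>"
  then obtain \<gamma> where g: "S = \<Union>\<gamma>" "\<gamma> \<in> \<Gamma>0" unfolding blowup_def by auto
  then show "S \<in> johnson_verts V (a * k0)" unfolding johnson_verts_def
    using G0U[OF g(2)] card_Union Union_fin(2) by simp
qed

lemma img_Union: assumes "\<forall>u\<in>U. g ` u = \<sigma> u" "\<gamma> \<subseteq> U" shows "g ` \<Union>\<gamma> = \<Union>(\<sigma> ` \<gamma>)"
proof -
  have "g ` \<Union>\<gamma> = \<Union>((\<lambda>u. g ` u) ` \<gamma>)" by (rule image_Union)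
  also have "\<dots> = \<Union>(\<sigma> ` \<gamma>)" using assms by (metis (no_types, lifting) image_cong subsetD)
  finally show ?thesis .
qed

lemma wreath_img:
  assumes g: "g \<in> W" shows "(\<lambda>S. g ` S) ` \<Gamma> = \<Gamma>"
proof -
  define \<sigma> where "\<sigma> = ind U g"
  have s: "\<sigma> \<in> A" "\<And>u. u \<in> U \<Longrightarrow> \<sigma> u = g ` u" using wreath_memD[OF g] unfolding \<sigma>_def by auto
  have inv: "(\<lambda>S. \<sigma> ` S) ` \<Gamma>0 = \<Gamma>0" using aut_symD[OF s(1)] by simp
  have gs: "\<forall>u\<in>U. g ` u = \<sigma> u" using s(2) by simp
  have "(\<lambda>S. g ` S) ` \<Gamma> = (\<lambda>\<gamma>. \<Union>(\<sigma> ` \<gamma>)) ` \<Gamma>0"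
    unfolding blowup_def image_image
  proof (rule image_cong)
    fix \<gamma> assume "\<gamma> \<in> \<Gamma>0"
    then show "g ` \<Union>\<gamma> = \<Union>(\<sigma> ` \<gamma>)" by (rule img_Union[OF gs G0U(1)])
  qed simp
  also have "\<dots> = (\<lambda>\<gamma>. \<Union>\<gamma>) ` ((\<lambda>S. \<sigma> ` S) ` \<Gamma>0)" by (simp add: image_image)
  also have "\<dots> = \<Gamma>" unfolding blowup_def using inv by simp
  finally show ?thesis .
qed

lemma part1: "\<forall>g\<in>W. (\<lambda>S. g ` S) \<in> johnson_aut V (a * k0) \<Gamma>"
proof
  fix g assume g: "g \<in> W"
  show "(\<lambda>S. g ` S) \<in> johnson_aut V (a * k0) \<Gamma>"
    using perm_jaut[OF wreath_memD(1)[OF g] finV] wreath_img[OF g] by simp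
qed

definition "D0 = {card (\<gamma> - \<gamma>') | \<gamma> \<gamma>'. \<gamma> \<in> \<Gamma>0 \<and> \<gamma>' \<in> \<Gamma>0 \<and> \<gamma> \<noteq> \<gamma>'}"

lemma md0: "min_dist U k0 \<Gamma>0 = Inf (enat ` D0)"
proof -
  have "min_dist U k0 \<Gamma>0 = Inf {enat (card (x - y)) | x y. x \<in> \<Gamma>0 \<and> y \<in> \<Gamma>0 \<and> x \<noteq> y}"
    by (rule min_dist_eq[OF finU G0])
  also have "{enat (card (x - y)) | x y. x \<in> \<Gamma>0 \<and> y \<in> \<Gamma>0 \<and> x \<noteq> y} = enat ` D0"
  proof (intro set_eqI iffI)
    fix z assume "z \<in> {enat (card (x - y)) | x y. x \<in> \<Gamma>0 \<and> y \<in> \<Gamma>0 \<and> x \<noteq> y}"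
    then obtain x y where "z = enat (card (x - y))" "x \<in> \<Gamma>0" "y \<in> \<Gamma>0" "x \<noteq> y" by blast
    moreover have "card (x - y) \<in> D0" using calculation unfolding D0_def by blast
    ultimately show "z \<in> enat ` D0" by blast
  next
    fix z assume "z \<in> enat ` D0"
    then obtain n where "z = enat n" "n \<in> D0" by blast
    then obtain x y where "z = enat (card (x - y))" "x \<in> \<Gamma>0" "y \<in> \<Gamma>0" "x \<noteq> y"
      unfolding D0_def by blast
    then show "z \<in> {enat (card (x - y)) | x y. x \<in> \<Gamma>0 \<and> y \<in> \<Gamma>0 \<and> x \<noteq> y}" by blast
  qed
  finally show ?thesis .
qed

lemma D0_ge1: assumes "\<gamma> \<in> \<Gamma>0" "\<gamma>' \<in> \<Gamma>0" "\<gamma> \<noteq> \<gamma>'" shows "card (\<gamma> - \<gamma>') \<ge> 1"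
proof (rule ccontr)
  assume "\<not> ?thesis"
  hence "card (\<gamma> - \<gamma>') = 0" by simp
  hence "\<gamma> - \<gamma>' = {}" using G0fin[OF assms(1)] by simp
  hence "\<gamma> \<subseteq> \<gamma>'" by auto
  hence "\<gamma> = \<gamma>'" using G0fin G0U assms by (metis card_subset_eq)
  thus False using assms by simp
qed

lemma part2: "min_dist V (a * k0) \<Gamma> = enat a * min_dist U k0 \<Gamma>0"
proof -
  have key: "card (\<Union>\<gamma> - \<Union>\<gamma>') = a * card (\<gamma> - \<gamma>')" if "\<gamma> \<in> \<Gamma>0" "\<gamma>' \<in> \<Gamma>0" for \<gamma> \<gamma>'
  proof -
    have s: "\<gamma> \<subseteq> U" "\<gamma>' \<subseteq> U" using G0U that by auto
    hence s2: "\<gamma> - \<gamma>' \<subseteq> U" by auto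
    have "card (\<Union>\<gamma> - \<Union>\<gamma>') = card (\<Union>(\<gamma> - \<gamma>'))" by (simp add: Union_diff[OF s])
    also have "\<dots> = a * card (\<gamma> - \<gamma>')" by (rule card_Union[OF s2])
    finally show ?thesis .
  qed
  have inj: "\<Union>\<gamma> = \<Union>\<gamma>' \<longleftrightarrow> \<gamma> = \<gamma>'" if "\<gamma> \<in> \<Gamma>0" "\<gamma>' \<in> \<Gamma>0" for \<gamma> \<gamma>'
    using Union_inj[OF G0U(1)[OF that(1)] G0U(1)[OF that(2)]] by auto
  have "min_dist V (a * k0) \<Gamma> = Inf {enat (card (x - y)) | x y. x \<in> \<Gamma> \<and> y \<in> \<Gamma> \<and> x \<noteq> y}"
    by (rule min_dist_eq[OF finV blow_verts])
  also have "{enat (card (x - y)) | x y. x \<in> \<Gamma> \<and> y \<in> \<Gamma> \<and> x \<noteq> y} = (\<lambda>n. enat (a * n)) ` D0"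
  proof (intro set_eqI iffI)
    fix z assume "z \<in> {enat (card (x - y)) | x y. x \<in> \<Gamma> \<and> y \<in> \<Gamma> \<and> x \<noteq> y}"
    then obtain x y where xy: "z = enat (card (x - y))" "x \<in> \<Gamma>" "y \<in> \<Gamma>" "x \<noteq> y" by blast
    then obtain \<gamma> \<gamma>' where g: "x = \<Union>\<gamma>" "\<gamma> \<in> \<Gamma>0" "y = \<Union>\<gamma>'" "\<gamma>' \<in> \<Gamma>0"
      unfolding blowup_def by blast
    have "\<gamma> \<noteq> \<gamma>'" using g xy(4) by blast
    moreover have "z = enat (a * card (\<gamma> - \<gamma>'))" using xy g key by simp
    moreover have "card (\<gamma> - \<gamma>') \<in> D0" unfolding D0_def using g calculation(1) by blast
    ultimately show "z \<in> (\<lambda>n. enat (a * n)) ` D0" by blast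
  next
    fix z assume "z \<in> (\<lambda>n. enat (a * n)) ` D0"
    then obtain n where n: "z = enat (a * n)" "n \<in> D0" by blast
    then obtain \<gamma> \<gamma>' where g0: "n = card (\<gamma> - \<gamma>')" "\<gamma> \<in> \<Gamma>0" "\<gamma>' \<in> \<Gamma>0" "\<gamma> \<noteq> \<gamma>'"
      unfolding D0_def by blast
    hence g: "z = enat (a * card (\<gamma> - \<gamma>'))" "\<gamma> \<in> \<Gamma>0" "\<gamma>' \<in> \<Gamma>0" "\<gamma> \<noteq> \<gamma>'" using n by auto
    have "\<Union>\<gamma> \<noteq> \<Union>\<gamma>'" using inj[OF g(2,3)] g(4) by simp
    moreover have "\<Union>\<gamma> \<in> \<Gamma>" "\<Union>\<gamma>' \<in> \<Gamma>" using g unfolding blowup_def by auto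
    moreover have "z = enat (card (\<Union>\<gamma> - \<Union>\<gamma>'))" using g key by simp
    ultimately show "z \<in> {enat (card (x - y)) | x y. x \<in> \<Gamma> \<and> y \<in> \<Gamma> \<and> x \<noteq> y}" by blast
  qed
  also have "Inf ((\<lambda>n. enat (a * n)) ` D0) = enat a * Inf (enat ` D0)"
    using Inf_scale a1 by simp
  finally show ?thesis using md0 by simp
qed

lemma dist1:
  assumes "\<gamma>1 \<in> \<Gamma>0" "\<gamma>2 \<in> \<Gamma>0" "\<gamma>1 \<noteq> \<gamma>2" "card (\<gamma>1 - \<gamma>2) = 1"
  shows "min_dist U k0 \<Gamma>0 = 1"
  unfolding md0
proof (rule antisym)
  have "1 = card (\<gamma>1 - \<gamma>2) \<and> \<gamma>1 \<in> \<Gamma>0 \<and> \<gamma>2 \<in> \<Gamma>0 \<and> \<gamma>1 \<noteq> \<gamma>2" using assms by simp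
  then have "1 \<in> D0" unfolding D0_def by blast
  then show "Inf (enat ` D0) \<le> 1" by (metis Inf_lower image_eqI one_enat_def)
  show "1 \<le> Inf (enat ` D0)"
  proof (rule Inf_greatest)
    fix z assume "z \<in> enat ` D0"
    then obtain n where n: "z = enat n" "n \<in> D0" by blast
    then obtain \<gamma> \<gamma>' where g0: "n = card (\<gamma> - \<gamma>')" "\<gamma> \<in> \<Gamma>0" "\<gamma>' \<in> \<Gamma>0" "\<gamma> \<noteq> \<gamma>'"
      unfolding D0_def by blast
    then show "1 \<le> z" using D0_ge1[OF g0(2-4)] n by (simp add: one_enat_def)
  qed
qed

lemma dist2:
  assumes "\<forall>\<gamma>1\<in>\<Gamma>0. \<forall>\<gamma>2\<in>\<Gamma>0. \<gamma>1 \<noteq> \<gamma>2 \<longrightarrow> card (\<gamma>1 - \<gamma>2) \<noteq> 1"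
  shows "min_dist U k0 \<Gamma>0 \<ge> 2"
  unfolding md0
proof (rule Inf_greatest)
  fix z assume "z \<in> enat ` D0"
  then obtain n where n: "z = enat n" "n \<in> D0" by blast
  then obtain \<gamma>1 \<gamma>2 where g0: "n = card (\<gamma>1 - \<gamma>2)" "\<gamma>1 \<in> \<Gamma>0" "\<gamma>2 \<in> \<Gamma>0" "\<gamma>1 \<noteq> \<gamma>2"
    unfolding D0_def by blast
  hence g: "z = enat (card (\<gamma>1 - \<gamma>2))" "\<gamma>1 \<in> \<Gamma>0" "\<gamma>2 \<in> \<Gamma>0" "\<gamma>1 \<noteq> \<gamma>2" using n by auto
  have "card (\<gamma>1 - \<gamma>2) \<noteq> 1" using assms g(2-4) by blast
  hence "card (\<gamma>1 - \<gamma>2) \<ge> 2" using D0_ge1[OF g(2-4)] by linarith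
  then show "2 \<le> z" using g(1) by (simp add: numeral_eq_enat)
qed

end



context blow0
begin

lemma sitD:
  assumes "strongly_incidence_transitive H X \<Delta>"
  shows "\<forall>h\<in>H. (\<lambda>S. h ` S) ` \<Delta> = \<Delta>" "set_transitive H \<Delta>"
    "\<forall>d\<in>\<Delta>. \<forall>x\<in>d. \<forall>y\<in>X - d. \<forall>x'\<in>d. \<forall>y'\<in>X - d.
         \<exists>h\<in>H. h ` d = d \<and> h x = x' \<and> h y = y'"
  using assms unfolding strongly_incidence_transitive_def by simp_all

lemma closure:
  assumes sit: "strongly_incidence_transitive A U \<Gamma>0"
    and g1: "\<gamma>1 \<in> \<Gamma>0" and g2: "\<gamma>2 \<in> \<Gamma>0" and c1: "card (\<gamma>1 - \<gamma>2) = 1"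
  shows "\<Gamma>0 = johnson_verts U k0"
proof -
  note inv = sitD(1)[OF sit] and tr = sitD(2)[OF sit] and st = sitD(3)[OF sit, rule_format]
  obtain x1 where x1: "\<gamma>1 - \<gamma>2 = {x1}" using c1 card_1_singletonE by blast
  have "card (\<gamma>2 - \<gamma>1) = 1" using card_diff_sym[OF G0fin[OF g1] G0fin[OF g2]] G0U g1 g2 c1 by simp
  then obtain y1 where y1: "\<gamma>2 - \<gamma>1 = {y1}" using card_1_singletonE by blast
  have x1g: "x1 \<in> \<gamma>1" "x1 \<notin> \<gamma>2" using x1 by (metis Diff_iff insertI1)+
  have y1g0: "y1 \<in> \<gamma>2" "y1 \<notin> \<gamma>1" using y1 by (metis Diff_iff insertI1)+
  have d1: "z = x1" if "z \<in> \<gamma>1" "z \<notin> \<gamma>2" for z using x1 that by (metis Diff_iff singletonD)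
  have d2: "z = y1" if "z \<in> \<gamma>2" "z \<notin> \<gamma>1" for z using y1 that by (metis Diff_iff singletonD)
  have g2eq: "\<gamma>2 = insert y1 (\<gamma>1 - {x1})"
  proof (intro set_eqI iffI)
    fix z assume z: "z \<in> \<gamma>2"
    show "z \<in> insert y1 (\<gamma>1 - {x1})"
    proof (cases "z \<in> \<gamma>1")
      case True then show ?thesis using z x1g(2) by auto
    next
      case False then show ?thesis using z d2 by auto
    qed
  next
    fix z assume z: "z \<in> insert y1 (\<gamma>1 - {x1})"
    then show "z \<in> \<gamma>2" using y1g0(1) d1 by auto
  qed
  have y1U: "y1 \<in> U" using G0U(1)[OF g2] y1g0(1) by (rule subsetD)
  note y1g = y1U y1g0(2)
  have nbr: "insert y (\<gamma> - {x}) \<in> \<Gamma>0" if g: "\<gamma> \<in> \<Gamma>0" "x \<in> \<gamma>" "y \<in> U - \<gamma>" for \<gamma> x y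
  proof -
    have "\<exists>h\<in>A. h ` \<gamma>1 = \<gamma>" using tr g1 g(1) unfolding set_transitive_def by simp
    then obtain h where h: "h \<in> A" "h ` \<gamma>1 = \<gamma>" by blast
    have hp: "h permutes U" using aut_symD(1)[OF h(1)] .
    have hi: "inj h" using permutes_inj[OF hp] .
    have "h x1 \<in> h ` \<gamma>1" using x1g(1) by (rule imageI)
    hence hx: "h x1 \<in> \<gamma>" using h(2) by simp
    moreover have hy: "h y1 \<in> U - \<gamma>"
    proof -
      have "h y1 \<in> U" using y1g(1) hp by (simp add: permutes_in_image)
      moreover have "h y1 \<notin> h ` \<gamma>1" using y1g(2) hi by (simp add: inj_image_mem_iff)
      hence "h y1 \<notin> \<gamma>" using h(2) by simp
      ultimately show ?thesis by blast
    qed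
    obtain h' where h': "h' \<in> A" "h' ` \<gamma> = \<gamma>" "h' (h x1) = x" "h' (h y1) = y"
      using st[OF g(1) hx hy g(2,3)] by blast
    have hi': "inj h'" using permutes_inj[OF aut_symD(1)[OF h'(1)]] .
    have e1: "(\<lambda>S. h ` S) ` \<Gamma>0 = \<Gamma>0" by (rule bspec[OF inv h(1)])
    have e2: "(\<lambda>S. h' ` S) ` \<Gamma>0 = \<Gamma>0" by (rule bspec[OF inv h'(1)])
    have "(\<lambda>S. h ` S) \<gamma>2 \<in> (\<lambda>S. h ` S) ` \<Gamma>0" using g2 by (rule imageI)
    hence m1: "h ` \<gamma>2 \<in> \<Gamma>0" using e1 by simp
    have "(\<lambda>S. h' ` S) (h ` \<gamma>2) \<in> (\<lambda>S. h' ` S) ` \<Gamma>0" using m1 by (rule imageI)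
    hence "h' ` h ` \<gamma>2 \<in> \<Gamma>0" using e2 by simp
    moreover have "h ` \<gamma>2 = insert (h y1) (\<gamma> - {h x1})"
      unfolding g2eq using hi h(2) by (simp add: image_set_diff)
    moreover have "h' ` insert (h y1) (\<gamma> - {h x1}) = insert y (\<gamma> - {x})"
      using hi' h' by (simp add: image_set_diff)
    ultimately show ?thesis by simp
  qed
  have all: "\<forall>\<gamma>\<in>\<Gamma>0. \<forall>S\<in>johnson_verts U k0. card (S - \<gamma>) = n \<longrightarrow> S \<in> \<Gamma>0" for n
  proof (induction n)
    case 0
    show ?case
    proof (intro ballI impI)
      fix \<gamma> S assume g: "\<gamma> \<in> \<Gamma>0" and S: "S \<in> johnson_verts U k0" and c: "card (S - \<gamma>) = 0"
      have fS: "finite S" using jv_finite[OF finU S] .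
      hence "S \<subseteq> \<gamma>" using c by auto
      moreover have "card S = card \<gamma>" using S G0U g unfolding johnson_verts_def by auto
      ultimately have "S = \<gamma>" using G0fin[OF g] card_subset_eq by blast
      then show "S \<in> \<Gamma>0" using g by simp
    qed
  next
    case (Suc m)
    show ?case
    proof (intro ballI impI)
      fix \<gamma> S assume g: "\<gamma> \<in> \<Gamma>0" and S: "S \<in> johnson_verts U k0" and c: "card (S - \<gamma>) = Suc m"
      have fS: "finite S" using jv_finite[OF finU S] .
      have SU: "S \<subseteq> U" "card S = k0" using S unfolding johnson_verts_def by auto
      have "S - \<gamma> \<noteq> {}" using c by (metis card.empty nat.distinct(1))
      then obtain y where y: "y \<in> S" "y \<notin> \<gamma>" by blast
      have "card (\<gamma> - S) = Suc m" using card_diff_sym[OF fS G0fin[OF g]] SU G0U g c by simp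
      hence "\<gamma> - S \<noteq> {}" by (metis card.empty nat.distinct(1))
      then obtain x where x: "x \<in> \<gamma>" "x \<notin> S" by blast
      define \<gamma>' where "\<gamma>' = insert y (\<gamma> - {x})"
      have g': "\<gamma>' \<in> \<Gamma>0" unfolding \<gamma>'_def using nbr g x y SU by blast
      have "S - \<gamma>' = (S - \<gamma>) - {y}" unfolding \<gamma>'_def using x by auto
      hence "card (S - \<gamma>') = m" using c y fS by simp
      then show "S \<in> \<Gamma>0" using Suc.IH g' S by blast
    qed
  qed
  show ?thesis
  proof
    show "\<Gamma>0 \<subseteq> johnson_verts U k0" by (rule G0)
    show "johnson_verts U k0 \<subseteq> \<Gamma>0" using all g1 by blast
  qed
qed

lemma part3b:
  assumes sit: "strongly_incidence_transitive A U \<Gamma>0"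
  shows "\<Gamma>0 = johnson_verts U k0 \<or> min_dist U k0 \<Gamma>0 \<ge> 2"
proof (cases "\<forall>\<gamma>1\<in>\<Gamma>0. \<forall>\<gamma>2\<in>\<Gamma>0. \<gamma>1 \<noteq> \<gamma>2 \<longrightarrow> card (\<gamma>1 - \<gamma>2) \<noteq> 1")
  case True then show ?thesis using dist2 by blast
next
  case False
  then obtain \<gamma>1 \<gamma>2 where "\<gamma>1 \<in> \<Gamma>0" "\<gamma>2 \<in> \<Gamma>0" "card (\<gamma>1 - \<gamma>2) = 1" by blast
  then show ?thesis using closure[OF sit] by blast
qed

lemma part3a:
  assumes sit: "strongly_incidence_transitive A U \<Gamma>0"
  shows "strongly_incidence_transitive W V \<Gamma>"
proof -
  note inv = sitD(1)[OF sit] and tr = sitD(2)[OF sit] and st = sitD(3)[OF sit, rule_format]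
  have i: "\<forall>h\<in>W. (\<lambda>S. h ` S) ` \<Gamma> = \<Gamma>"
  proof
    fix h assume "h \<in> W" then show "(\<lambda>S. h ` S) ` \<Gamma> = \<Gamma>" by (rule wreath_img)
  qed
  have t: "set_transitive W \<Gamma>" unfolding set_transitive_def
  proof (intro ballI)
    fix x y assume "x \<in> \<Gamma>" "y \<in> \<Gamma>"
    then obtain \<gamma> \<gamma>' where g: "x = \<Union>\<gamma>" "\<gamma> \<in> \<Gamma>0" "y = \<Union>\<gamma>'" "\<gamma>' \<in> \<Gamma>0"
      unfolding blowup_def by blast
    have "\<exists>\<sigma>\<in>A. \<sigma> ` \<gamma> = \<gamma>'" using tr g(2,4) unfolding set_transitive_def by simp
    then obtain \<sigma> where s: "\<sigma> \<in> A" "\<sigma> ` \<gamma> = \<gamma>'" by blast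
    have sp: "\<sigma> permutes U" using aut_symD(1)[OF s(1)] .
    obtain g where gg: "g permutes V" "\<forall>u\<in>U. g ` u = \<sigma> u" using lift1[OF sp] by blast
    have "g \<in> W" using wreath_memI[OF gg(1) sp gg(2) s(1)] .
    moreover have "g ` x = y" using img_Union[OF gg(2) G0U(1)[OF g(2)]] g s(2) by simp
    ultimately show "\<exists>h\<in>W. h ` x = y" by blast
  qed
  have s3: "\<exists>h\<in>W. h ` d = d \<and> h x = x' \<and> h y = y'"
    if d: "d \<in> \<Gamma>" and x: "x \<in> d" and y: "y \<in> V - d" and x': "x' \<in> d" and y': "y' \<in> V - d"
    for d x y x' y'
  proof -
    obtain \<gamma> where g: "d = \<Union>\<gamma>" "\<gamma> \<in> \<Gamma>0" using d unfolding blowup_def by blast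
    have gU: "\<gamma> \<subseteq> U" using G0U(1)[OF g(2)] .
    have xV: "x \<in> V" "x' \<in> V" using x x' g gU Union_fin(2) by blast+
    have px: "pt x \<in> \<gamma>" "pt x' \<in> \<gamma>" using Union_mem[OF gU] xV x x' g by auto
    have py: "pt y \<in> U - \<gamma>" "pt y' \<in> U - \<gamma>" using Union_mem[OF gU] pt_in y y' g by auto
    obtain \<sigma> where s: "\<sigma> \<in> A" "\<sigma> ` \<gamma> = \<gamma>" "\<sigma> (pt x) = pt x'" "\<sigma> (pt y) = pt y'"
      using st[OF g(2) px(1) py(1) px(2) py(2)] by blast
    have sp: "\<sigma> permutes U" using aut_symD(1)[OF s(1)] .
    have ne: "pt x \<noteq> pt y" using px(1) py(1) by (metis DiffD2)
    have yV: "y \<in> V" "y' \<in> V" using y y' by auto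
    have uxy: "pt x \<in> U" "pt y \<in> U" using px(1) gU py(1) by auto
    have "x' \<in> \<sigma> (pt x)" using pt_in(2)[OF xV(2)] s(3) by simp
    moreover have "y' \<in> \<sigma> (pt y)" using pt_in(2)[OF yV(2)] s(4) by simp
    ultimately obtain g where gg: "g permutes V" "\<forall>u\<in>U. g ` u = \<sigma> u" "g x = x'" "g y = y'"
      using lift2[OF sp uxy ne pt_in(2)[OF xV(1)] pt_in(2)[OF yV(1)]] by blast
    have "g \<in> W" using wreath_memI[OF gg(1) sp gg(2) s(1)] .
    moreover have "g ` d = d" using img_Union[OF gg(2) gU] g s(2) by simp
    ultimately show ?thesis using gg by blast
  qed
  show ?thesis unfolding strongly_incidence_transitive_def
  proof (intro conjI ballI)
    fix h assume "h \<in> W" then show "(\<lambda>S. h ` S) ` \<Gamma> = \<Gamma>" by (rule wreath_img)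
  next
    show "set_transitive W \<Gamma>" by (rule t)
  next
    fix d x y x' y' assume "d \<in> \<Gamma>" "x \<in> d" "y \<in> V - d" "x' \<in> d" "y' \<in> V - d"
    then show "\<exists>h\<in>W. h ` d = d \<and> h x = x' \<and> h y = y'" by (rule s3)
  qed
qed

end



context blow0
begin

lemma cnt:
  assumes gU: "\<gamma> \<subseteq> U" and x: "x \<in> \<gamma>" and y: "y \<in> U" "y \<notin> \<gamma>" and p: "p \<in> x" and q: "q \<in> y"
    and u: "u \<in> U"
  shows "card (u \<inter> insert q (\<Union>\<gamma> - {p})) =
    (if u = x then a - 1 else if u = y then 1 else if u \<in> \<gamma> then a else 0)"
proof -
  have xU: "x \<in> U" using gU x by blast
  have xy: "x \<noteq> y" using x y(2) by blast
  have qx: "q \<notin> x" using disj[OF xU y(1) xy] q by blast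
  consider (cx) "u = x" | (cy) "u = y" | (cg) "u \<noteq> x" "u \<noteq> y" "u \<in> \<gamma>"
    | (co) "u \<noteq> x" "u \<noteq> y" "u \<notin> \<gamma>" by blast
  then show ?thesis
  proof cases
    case cx
    have "u \<inter> insert q (\<Union>\<gamma> - {p}) = x - {p}" using cx qx x by auto
    then show ?thesis using cx p u_fin[OF xU] u_card[OF xU] by simp
  next
    case cy
    have e: "y \<inter> \<Union>\<gamma> = {}" using Int_Union[OF gU y(1)] y(2) by simp
    have "u \<inter> insert q (\<Union>\<gamma> - {p}) = {q}" using cy q e by auto
    then show ?thesis using cy xy by simp
  next
    case cg
    have qu: "q \<notin> u" using disj[OF u y(1) cg(2)] q by blast
    have pu: "p \<notin> u" using disj[OF u xU cg(1)] p by blast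
    have "u \<inter> insert q (\<Union>\<gamma> - {p}) = u" using qu pu cg(3) by auto
    then show ?thesis using cg u_card[OF u] by simp
  next
    case co
    have qu: "q \<notin> u" using disj[OF u y(1) co(2)] q by blast
    have e: "u \<inter> \<Union>\<gamma> = {}" using Int_Union[OF gU u] co(3) by simp
    have "u \<inter> insert q (\<Union>\<gamma> - {p}) = {}" using qu e by auto
    then show ?thesis using co by simp
  qed
qed

lemma nbrN:
  assumes g: "\<gamma> \<in> \<Gamma>0" and x: "x \<in> \<gamma>" and y: "y \<in> U" "y \<notin> \<gamma>" and p: "p \<in> x" and q: "q \<in> y"
  shows "insert q (\<Union>\<gamma> - {p}) \<in> nbr_set V (a * k0) \<Gamma>"
proof -
  define N where "N = insert q (\<Union>\<gamma> - {p})"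
  define D where "D = \<Union>\<gamma>"
  have gU: "\<gamma> \<subseteq> U" and cg: "card \<gamma> = k0" using G0U g by auto
  have xU: "x \<in> U" using gU x by blast
  have pD: "p \<in> D" unfolding D_def using x p by blast
  have qV: "q \<in> V" using u_sub[OF y(1)] q by blast
  have qD: "q \<notin> D" unfolding D_def using Union_mem[OF gU qV] pt_eq[OF y(1) q] y(2) by simp
  have fD: "finite D" and DV: "D \<subseteq> V" unfolding D_def using Union_fin[OF gU] by auto
  have cD: "card D = a * k0" unfolding D_def using card_Union[OF gU] cg by simp
  have NV: "N \<subseteq> V" unfolding N_def D_def[symmetric] using DV qV by auto
  have "card N = Suc (card (D - {p}))" unfolding N_def D_def[symmetric] using fD qD by simp
  also have "\<dots> = card D"
  proof -
    have "card D > 0" using fD pD by (auto simp: card_gt_0_iff)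
    then show ?thesis using fD pD by simp
  qed
  finally have cN: "card N = a * k0" using cD by simp
  have Nv: "N \<in> johnson_verts V (a * k0)" unfolding johnson_verts_def using NV cN by simp
  have Dv: "D \<in> johnson_verts V (a * k0)" unfolding johnson_verts_def using DV cD by simp
  have DG: "D \<in> \<Gamma>" unfolding D_def blowup_def using g by (rule imageI)
  have cx: "card (x \<inter> N) = a - 1" unfolding N_def using cnt[OF gU x y p q xU] by simp
  have NG: "N \<notin> \<Gamma>"
  proof
    assume "N \<in> \<Gamma>"
    then obtain \<gamma>'' where g'': "N = \<Union>\<gamma>''" "\<gamma>'' \<in> \<Gamma>0" unfolding blowup_def by blast
    have "x \<inter> N = (if x \<in> \<gamma>'' then x else {})" using Int_Union[OF G0U(1)[OF g''(2)] xU] g''(1) by simp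
    hence "card (x \<inter> N) = a \<or> card (x \<inter> N) = 0" using u_card[OF xU] by simp
    thus False using cx a1 by auto
  qed
  have "D \<inter> N = D - {p}" unfolding N_def D_def[symmetric] using qD by auto
  hence "card (D \<inter> N) = a * k0 - 1" using fD pD cD by simp
  moreover have "D \<noteq> N" unfolding N_def using qD by auto
  ultimately have adj: "johnson_adj V (a * k0) D N" unfolding johnson_adj_def using Dv Nv by simp
  have "N \<in> nbr_set V (a * k0) \<Gamma>" unfolding nbr_set_def using Nv NG adj DG by blast
  then show ?thesis unfolding N_def .
qed

lemma part4:
  assumes nt: "neighbour_transitive W V (a * k0) \<Gamma>" and nd: "\<not> (a = 2 \<and> min_dist U k0 \<Gamma>0 = 1)"
  shows "strongly_incidence_transitive A U \<Gamma>0"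
proof -
  have tG: "set_transitive W \<Gamma>" and tN: "set_transitive W (nbr_set V (a * k0) \<Gamma>)"
    using nt unfolding neighbour_transitive_def by simp_all
  have t: "set_transitive A \<Gamma>0" unfolding set_transitive_def
  proof (intro ballI)
    fix \<gamma> \<gamma>' assume g: "\<gamma> \<in> \<Gamma>0" "\<gamma>' \<in> \<Gamma>0"
    have "\<Union>\<gamma> \<in> \<Gamma>" unfolding blowup_def using g(1) by (rule imageI)
    moreover have "\<Union>\<gamma>' \<in> \<Gamma>" unfolding blowup_def using g(2) by (rule imageI)
    ultimately have "\<exists>g\<in>W. g ` \<Union>\<gamma> = \<Union>\<gamma>'" using tG unfolding set_transitive_def by simp
    then obtain g where gW: "g \<in> W" and gg: "g ` \<Union>\<gamma> = \<Union>\<gamma>'" by blast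
    define \<sigma> where "\<sigma> = ind U g"
    have sA: "\<sigma> \<in> A" using wreath_memD(2)[OF gW] unfolding \<sigma>_def .
    have gs: "\<forall>u\<in>U. g ` u = \<sigma> u" using wreath_memD(3)[OF gW] unfolding \<sigma>_def by simp
    have sp: "\<sigma> permutes U" using aut_symD(1)[OF sA] .
    have gU: "\<gamma> \<subseteq> U" "\<gamma>' \<subseteq> U" using G0U g by auto
    have "\<sigma> ` \<gamma> \<subseteq> U" using gU(1) sp by (auto simp: permutes_in_image)
    moreover have "\<Union>(\<sigma> ` \<gamma>) = \<Union>\<gamma>'" using img_Union[OF gs gU(1)] gg by simp
    ultimately have "\<sigma> ` \<gamma> = \<gamma>'" by (rule Union_inj[OF _ gU(2)])
    then show "\<exists>h\<in>A. h ` \<gamma> = \<gamma>'" using sA by blast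
  qed
  have s3: "\<exists>h\<in>A. h ` \<gamma> = \<gamma> \<and> h x = x' \<and> h y = y'"
    if g: "\<gamma> \<in> \<Gamma>0" and x: "x \<in> \<gamma>" and y: "y \<in> U - \<gamma>" and x': "x' \<in> \<gamma>" and y': "y' \<in> U - \<gamma>"
    for \<gamma> x y x' y'
  proof -
    have gU: "\<gamma> \<subseteq> U" and cg: "card \<gamma> = k0" using G0U g by auto
    have fg: "finite \<gamma>" using G0fin[OF g] .
    have xU: "x \<in> U" "x' \<in> U" using gU x x' by auto
    have yU: "y \<in> U" "y \<notin> \<gamma>" "y' \<in> U" "y' \<notin> \<gamma>" using y y' by auto
    obtain p where p: "p \<in> x" using u_ne[OF xU(1)] by blast
    obtain p' where p': "p' \<in> x'" using u_ne[OF xU(2)] by blast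
    obtain q where q: "q \<in> y" using u_ne[OF yU(1)] by blast
    obtain q' where q': "q' \<in> y'" using u_ne[OF yU(3)] by blast
    define N where "N = insert q (\<Union>\<gamma> - {p})"
    define N' where "N' = insert q' (\<Union>\<gamma> - {p'})"
    have NN: "N \<in> nbr_set V (a * k0) \<Gamma>" "N' \<in> nbr_set V (a * k0) \<Gamma>"
      unfolding N_def N'_def using nbrN[OF g x yU(1,2) p q] nbrN[OF g x' yU(3,4) p' q'] by auto
    hence "\<exists>g\<in>W. g ` N = N'" using tN unfolding set_transitive_def by simp
    then obtain g where gW: "g \<in> W" and gN: "g ` N = N'" by blast
    define \<sigma> where "\<sigma> = ind U g"
    have sA: "\<sigma> \<in> A" using wreath_memD(2)[OF gW] unfolding \<sigma>_def .
    have gs: "\<And>u. u \<in> U \<Longrightarrow> \<sigma> u = g ` u" using wreath_memD(3)[OF gW] unfolding \<sigma>_def by simp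
    have sp: "\<sigma> permutes U" using aut_symD(1)[OF sA] .
    have si: "inj \<sigma>" using permutes_inj[OF sp] .
    have gi: "inj g" using permutes_inj[OF wreath_memD(1)[OF gW]] .
    have sU: "\<And>u. u \<in> U \<Longrightarrow> \<sigma> u \<in> U" using sp by (simp add: permutes_in_image)
    have key: "card (\<sigma> u \<inter> N') = card (u \<inter> N)" if u: "u \<in> U" for u
    proof -
      have "\<sigma> u \<inter> N' = g ` (u \<inter> N)" using gs[OF u] gN gi by (simp add: image_Int)
      thus ?thesis using gi by (simp add: card_image inj_on_subset)
    qed
    define F where "F w = (if w = x' then a - 1 else if w = y' then 1 else if w \<in> \<gamma> then a else 0)" for w
    have cF: "card (w \<inter> N') = F w" if "w \<in> U" for w
      unfolding N'_def F_def using cnt[OF gU x' yU(3,4) p' q' that] .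
    have ex: "F (\<sigma> x) = a - 1"
      using key[OF xU(1)] cF[OF sU[OF xU(1)]] cnt[OF gU x yU(1,2) p q xU(1)] unfolding N_def by simp
    have xy: "x \<noteq> y" using x yU(2) by blast
    have ey: "F (\<sigma> y) = 1"
      using key[OF yU(1)] cF[OF sU[OF yU(1)]] cnt[OF gU x yU(1,2) p q yU(1)] xy unfolding N_def by simp
    have eg: "F (\<sigma> u) = a" if "u \<in> \<gamma>" "u \<noteq> x" for u
    proof -
      have uU: "u \<in> U" using that gU by blast
      have "u \<noteq> y" using that yU(2) by blast
      then show ?thesis using key[OF uU] cF[OF sU[OF uU]] cnt[OF gU x yU(1,2) p q uU] that
        unfolding N_def by simp
    qed
    have hx: "\<sigma> x = x' \<or> (a = 2 \<and> \<sigma> x = y')"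
    proof (cases "\<sigma> x = x'")
      case True thus ?thesis by simp
    next
      case n1: False
      show ?thesis
      proof (cases "\<sigma> x = y'")
        case True
        hence "a - 1 = 1" using ex n1 unfolding F_def by simp
        hence "a = 2" using a1 by linarith
        thus ?thesis using True by simp
      next
        case n2: False
        have "(if \<sigma> x \<in> \<gamma> then a else 0) = a - 1" using ex n1 n2 unfolding F_def by simp
        hence False using a1 by (cases "\<sigma> x \<in> \<gamma>") simp_all
        thus ?thesis ..
      qed
    qed
    have hy: "\<sigma> y = y' \<or> (a = 2 \<and> \<sigma> y = x')"
    proof (cases "\<sigma> y = y'")
      case True thus ?thesis by simp
    next
      case n1: False
      show ?thesis
      proof (cases "\<sigma> y = x'")
        case True
        hence "a - 1 = 1" using ey unfolding F_def by simp
        hence "a = 2" using a1 by linarith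
        thus ?thesis using True by simp
      next
        case n2: False
        have "(if \<sigma> y \<in> \<gamma> then a else 0) = 1" using ey n1 n2 unfolding F_def by simp
        hence False using a1 by (cases "\<sigma> y \<in> \<gamma>") simp_all
        thus ?thesis ..
      qed
    qed
    have hg: "\<sigma> u \<in> \<gamma> \<and> \<sigma> u \<noteq> x'" if "u \<in> \<gamma>" "u \<noteq> x" for u
    proof -
      have e: "F (\<sigma> u) = a" using eg[OF that] .
      have n1: "\<sigma> u \<noteq> x'"
      proof
        assume "\<sigma> u = x'" hence "a - 1 = a" using e unfolding F_def by simp
        thus False using a1 by linarith
      qed
      have n2: "\<sigma> u \<noteq> y'"
      proof
        assume "\<sigma> u = y'" hence "1 = a" using e n1 unfolding F_def by simp
        thus False using a1 by linarith
      qed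
      have "(if \<sigma> u \<in> \<gamma> then a else 0) = a" using e n1 n2 unfolding F_def by simp
      hence "\<sigma> u \<in> \<gamma>" using a1 by (cases "\<sigma> u \<in> \<gamma>") simp_all
      thus ?thesis using n1 by simp
    qed
    have cs: "card (\<sigma> ` \<gamma>) = k0" using cg si by (simp add: card_image inj_on_subset)
    show ?thesis
    proof (cases "\<sigma> x = x'")
      case True
      have "\<sigma> ` \<gamma> \<subseteq> \<gamma>"
      proof
        fix w assume "w \<in> \<sigma> ` \<gamma>"
        then obtain u where u: "u \<in> \<gamma>" "w = \<sigma> u" by blast
        show "w \<in> \<gamma>"
        proof (cases "u = x")
          case True then show ?thesis using u \<open>\<sigma> x = x'\<close> x' by simp
        next
          case False then show ?thesis using hg[OF u(1)] u by simp
        qed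
      qed
      hence sg: "\<sigma> ` \<gamma> = \<gamma>" using cs cg by (intro card_subset_eq[OF fg]) simp_all
      have "\<sigma> y = y'"
      proof (rule ccontr)
        assume "\<sigma> y \<noteq> y'"
        hence "\<sigma> y = \<sigma> x" using hy True by simp
        hence "y = x" using si by (simp add: inj_eq)
        thus False using xy by simp
      qed
      then show ?thesis using sA sg True by blast
    next
      case False
      hence a2: "a = 2" and sx: "\<sigma> x = y'" using hx by auto
      define \<gamma>2 where "\<gamma>2 = insert y' (\<gamma> - {x'})"
      have sub: "\<sigma> ` \<gamma> \<subseteq> \<gamma>2"
      proof
        fix w assume "w \<in> \<sigma> ` \<gamma>"
        then obtain u where u: "u \<in> \<gamma>" "w = \<sigma> u" by blast
        show "w \<in> \<gamma>2"
        proof (cases "u = x")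
          case True then show ?thesis using u sx unfolding \<gamma>2_def by simp
        next
          case False then show ?thesis using hg[OF u(1)] u unfolding \<gamma>2_def by simp
        qed
      qed
      have f2: "finite \<gamma>2" unfolding \<gamma>2_def using fg by simp
      have "card \<gamma>2 = Suc (card (\<gamma> - {x'}))" unfolding \<gamma>2_def using fg yU(4) by simp
      also have "\<dots> = card \<gamma>"
      proof -
        have "card \<gamma> > 0" using fg x' by (auto simp: card_gt_0_iff)
        then show ?thesis using fg x' by simp
      qed
      finally have c2: "card \<gamma>2 = k0" using cg by simp
      have sg: "\<sigma> ` \<gamma> = \<gamma>2" using card_subset_eq[OF f2 sub] cs c2 by simp
      have e1: "(\<lambda>S. \<sigma> ` S) ` \<Gamma>0 = \<Gamma>0" using aut_symD(2)[OF sA] .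
      have "(\<lambda>S. \<sigma> ` S) \<gamma> \<in> (\<lambda>S. \<sigma> ` S) ` \<Gamma>0" using g by (rule imageI)
      hence "\<sigma> ` \<gamma> \<in> \<Gamma>0" using e1 by simp
      hence g2: "\<gamma>2 \<in> \<Gamma>0" using sg by simp
      have ne: "\<gamma> \<noteq> \<gamma>2" unfolding \<gamma>2_def using yU(4) by auto
      have "\<gamma> - \<gamma>2 = {x'}" unfolding \<gamma>2_def using x' yU(4) by auto
      hence "card (\<gamma> - \<gamma>2) = 1" by simp
      hence "min_dist U k0 \<Gamma>0 = 1" using dist1[OF g g2 ne] by simp
      then show ?thesis using nd a2 by simp
    qed
  qed
  show ?thesis unfolding strongly_incidence_transitive_def
  proof (intro conjI ballI)
    fix h assume "h \<in> A" then show "(\<lambda>S. h ` S) ` \<Gamma>0 = \<Gamma>0" by (rule aut_symD(2))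
  next
    show "set_transitive A \<Gamma>0" by (rule t)
  next
    fix d x y x' y' assume "d \<in> \<Gamma>0" "x \<in> d" "y \<in> U - d" "x' \<in> d" "y' \<in> U - d"
    then show "\<exists>h\<in>A. h ` d = d \<and> h x = x' \<and> h y = y'" by (rule s3)
  qed
qed

end

theorem lemma4p6:
  fixes V :: "'a set" and U :: "'a set set" and \<Gamma>0 :: "'a set set set"
    and a b k0 :: nat
  assumes "finite V"
    and "partition_on V U"
    and "card U = b"
    and "\<forall>u\<in>U. card u = a"
    and "a > 1" and "b \<ge> 4"
    and "1 \<le> k0" and "k0 \<le> b - 1"
    and "\<Gamma>0 \<subseteq> johnson_verts U k0"
  shows "(\<forall>g\<in>wreath V U (aut_sym U k0 \<Gamma>0).
            (\<lambda>S. g ` S) \<in> johnson_aut V (a * k0) (blowup \<Gamma>0))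
    \<and> min_dist V (a * k0) (blowup \<Gamma>0) = enat a * min_dist U k0 \<Gamma>0
    \<and> (strongly_incidence_transitive (aut_sym U k0 \<Gamma>0) U \<Gamma>0 \<longrightarrow>
         strongly_incidence_transitive (wreath V U (aut_sym U k0 \<Gamma>0)) V (blowup \<Gamma>0)
         \<and> (\<Gamma>0 = johnson_verts U k0 \<or> min_dist U k0 \<Gamma>0 \<ge> 2))
    \<and> (neighbour_transitive (wreath V U (aut_sym U k0 \<Gamma>0)) V (a * k0) (blowup \<Gamma>0) \<longrightarrow>
         strongly_incidence_transitive (aut_sym U k0 \<Gamma>0) U \<Gamma>0
         \<or> (a = 2 \<and> min_dist U k0 \<Gamma>0 = 1))"
proof -
  interpret blow0 V U a k0 \<Gamma>0
    by unfold_locales (use assms in auto)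
  show ?thesis
  proof (intro conjI impI)
    show "\<forall>g\<in>wreath V U (aut_sym U k0 \<Gamma>0). (\<lambda>S. g ` S) \<in> johnson_aut V (a * k0) (blowup \<Gamma>0)"
      by (rule part1)
    show "min_dist V (a * k0) (blowup \<Gamma>0) = enat a * min_dist U k0 \<Gamma>0" by (rule part2)
  next
    assume "strongly_incidence_transitive (aut_sym U k0 \<Gamma>0) U \<Gamma>0"
    then show "strongly_incidence_transitive (wreath V U (aut_sym U k0 \<Gamma>0)) V (blowup \<Gamma>0)"
      by (rule part3a)
  next
    assume "strongly_incidence_transitive (aut_sym U k0 \<Gamma>0) U \<Gamma>0"
    then show "\<Gamma>0 = johnson_verts U k0 \<or> min_dist U k0 \<Gamma>0 \<ge> 2" by (rule part3b)
  next
    assume nt: "neighbour_transitive (wreath V U (aut_sym U k0 \<Gamma>0)) V (a * k0) (blowup \<Gamma>0)"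
    show "strongly_incidence_transitive (aut_sym U k0 \<Gamma>0) U \<Gamma>0 \<or> (a = 2 \<and> min_dist U k0 \<Gamma>0 = 1)"
    proof (cases "a = 2 \<and> min_dist U k0 \<Gamma>0 = 1")
      case True then show ?thesis by simp
    next
      case False then show ?thesis using part4[OF nt] by simp
    qed
  qed
qed

end
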